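(* Let $n\ge 3$ and let $S$ be a $4$-cap free, $n$-cup free configuration of size at least $\binom{n-1}{2}+1$. Let $L(S)$ be the set of starting points of all $(n-1)$-cups in $S$, $R(S)$ the set of ending points of all $(n-1)$-cups in $S$, $p_S$ the largest element of $L(S)$ and $q_S$ the smallest element of $R(S)$. Then $p_S \leq q_S$.
   Context: A configuration is a finite set $S$ of points with a linear order $<$ and, for every $3$-element subset, an arbitrary assignment declaring it either a cap or a cup. Points $x_1<\cdots<x_a$ form an $a$-cup (resp. $a$-cap) if every consecutive triple $\{x_{i-1},x_i,x_{i+1}\}$, $1<i<a$, is assigned cup (resp. cap); $1$- and $2$-element sets are both caps and cups. A cup $x_1\cdots x_a$ starts with $x_1$ and ends with $x_a$. (Under the hypotheses, $S$ contains at least one $(n-1)$-cup, so $L(S)$ and $R(S)$ are nonempty.) *)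

theory Defs
  imports Main
begin

(* A configuration: a finite set S of a linearly ordered type, together with
   a labelling T of 3-element subsets. For x < y < z, T x y z = True means
   {x,y,z} is a cup, T x y z = False means it is a cap. *)

definition is_cup :: "('a::linorder \<Rightarrow> 'a \<Rightarrow> 'a \<Rightarrow> bool) \<Rightarrow> 'a set \<Rightarrow> 'a list \<Rightarrow> bool" where
  "is_cup T S xs \<longleftrightarrow> sorted_wrt (<) xs \<and> set xs \<subseteq> S \<and>
     (\<forall>i. 0 < i \<and> i + 1 < length xs \<longrightarrow> T (xs ! (i - 1)) (xs ! i) (xs ! (i + 1)))"

definition is_cap :: "('a::linorder \<Rightarrow> 'a \<Rightarrow> 'a \<Rightarrow> bool) \<Rightarrow> 'a set \<Rightarrow> 'a list \<Rightarrow> bool" where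
  "is_cap T S xs \<longleftrightarrow> sorted_wrt (<) xs \<and> set xs \<subseteq> S \<and>
     (\<forall>i. 0 < i \<and> i + 1 < length xs \<longrightarrow> \<not> T (xs ! (i - 1)) (xs ! i) (xs ! (i + 1)))"

definition cup_starts :: "('a::linorder \<Rightarrow> 'a \<Rightarrow> 'a \<Rightarrow> bool) \<Rightarrow> 'a set \<Rightarrow> nat \<Rightarrow> 'a set" where
  "cup_starts T S k = {hd xs | xs. is_cup T S xs \<and> length xs = k}"

definition cup_ends :: "('a::linorder \<Rightarrow> 'a \<Rightarrow> 'a \<Rightarrow> bool) \<Rightarrow> 'a set \<Rightarrow> nat \<Rightarrow> 'a set" where
  "cup_ends T S k = {last xs | xs. is_cup T S xs \<and> length xs = k}"

end

theory Submission
  imports Defs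
begin

lemma Max_Min_empty: "Max {} = (Min {} :: 'a::linorder)"
  by (simp add: Max.eq_fold' Min.eq_fold')

lemma cup_ext_right:
  assumes c: "is_cup T S B" and l: "length B \<ge> 2" and p: "p \<in> S" and lt: "last B < p"
    and t: "T (B ! (length B - 2)) (last B) p"
  shows "is_cup T S (B @ [p])"
proof -
  have s: "sorted_wrt (<) B" and sub: "set B \<subseteq> S"
    and tr: "\<And>i. 0 < i \<Longrightarrow> i + 1 < length B \<Longrightarrow> T (B ! (i - 1)) (B ! i) (B ! (i + 1))"
    using c unfolding is_cup_def by auto
  have "\<forall>x\<in>set B. x < p"
  proof
    fix x assume "x \<in> set B"
    then obtain j where j: "j < length B" "x = B ! j" by (auto simp: in_set_conv_nth)
    have lB: "last B = B ! (length B - 1)" using l by (intro last_conv_nth) auto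
    have "x \<le> last B"
    proof (cases "j = length B - 1")
      case True then show ?thesis using j lB by simp
    next
      case False then show ?thesis using j lB s by (simp add: sorted_wrt_iff_nth_less less_imp_le)
    qed
    then show "x < p" using lt by simp
  qed
  then have s2: "sorted_wrt (<) (B @ [p])" using s by (simp add: sorted_wrt_append)
  have "T ((B@[p]) ! (i - 1)) ((B@[p]) ! i) ((B@[p]) ! (i + 1))"
    if "0 < i" "i + 1 < length (B@[p])" for i
  proof (cases "i + 1 < length B")
    case True
    then have "i - 1 < length B" "i < length B" by auto
    then show ?thesis using tr[of i] that True by (simp add: nth_append)
  next
    case False
    then have "i = length B - 1" using that by simp
    have ne: "B \<noteq> []" using l by auto
    have i1: "i - 1 = length B - 2" "length B - 2 < length B" using \<open>i = length B - 1\<close> l by auto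
    have e1: "(B@[p]) ! (i - 1) = B ! (length B - 2)" unfolding i1(1) using i1(2)
      by (simp only: nth_append if_True)
    have e2: "(B@[p]) ! i = last B" using \<open>i = length B - 1\<close> l ne
      by (simp add: nth_append last_conv_nth)
    have i3: "i + 1 = length B" using \<open>i = length B - 1\<close> l by auto
    have e3: "(B@[p]) ! (i + 1) = p" unfolding i3 by (rule nth_append_length)
    show ?thesis using t e1 e2 e3 by simp
  qed
  then show ?thesis unfolding is_cup_def using s2 sub p by auto
qed

lemma cup_ext_left:
  assumes c: "is_cup T S A" and l: "length A \<ge> 2" and q: "q \<in> S" and lt: "q < hd A"
    and t: "T q (hd A) (A ! 1)"
  shows "is_cup T S (q # A)"
proof -
  have s: "sorted_wrt (<) A" and sub: "set A \<subseteq> S"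
    and tr: "\<And>i. 0 < i \<Longrightarrow> i + 1 < length A \<Longrightarrow> T (A ! (i - 1)) (A ! i) (A ! (i + 1))"
    using c unfolding is_cup_def by auto
  have "\<forall>x\<in>set A. q < x"
  proof
    fix x assume "x \<in> set A"
    then obtain j where j: "j < length A" "x = A ! j" by (auto simp: in_set_conv_nth)
    have hA: "hd A = A ! 0" using l by (intro hd_conv_nth) auto
    have "hd A \<le> x"
    proof (cases "j = 0")
      case True then show ?thesis using j hA by simp
    next
      case False then show ?thesis using j hA s by (simp add: sorted_wrt_iff_nth_less less_imp_le)
    qed
    then show "q < x" using lt by simp
  qed
  then have s2: "sorted_wrt (<) (q # A)" using s by simp
  have "T ((q#A) ! (i - 1)) ((q#A) ! i) ((q#A) ! (i + 1))"
    if "0 < i" "i + 1 < length (q#A)" for i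
  proof (cases "i = 1")
    case True
    have "hd A = A ! 0" using l by (intro hd_conv_nth) auto
    then show ?thesis using t True by simp
  next
    case False
    define k where "k = i - 2"
    have k: "i = Suc (Suc k)" using that(1) False unfolding k_def by arith
    have "Suc k + 1 < length A" using that(2) k by simp
    then have "T (A ! k) (A ! Suc k) (A ! Suc (Suc k))" using tr[of "Suc k"] by simp
    then show ?thesis using k by simp
  qed
  then show ?thesis unfolding is_cup_def using s2 sub q by auto
qed

theorem lemma5p6:
  fixes S :: "'a::linorder set" and T :: "'a \<Rightarrow> 'a \<Rightarrow> 'a \<Rightarrow> bool" and n :: nat
  assumes "n \<ge> 3"
    and "finite S"
    and "\<not> (\<exists>xs. is_cap T S xs \<and> length xs = 4)"
    and "\<not> (\<exists>xs. is_cup T S xs \<and> length xs = n)"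
    and "card S \<ge> ((n - 1) choose 2) + 1"
  shows "Max (cup_starts T S (n - 1)) \<le> Min (cup_ends T S (n - 1))"
proof (cases "cup_starts T S (n - 1) = {}")
  case True
  then have "cup_ends T S (n - 1) = {}" unfolding cup_starts_def cup_ends_def by auto
  then show ?thesis using True Max_Min_empty by (metis order.refl)
next
  case False
  have hdS: "hd xs \<in> S" "last xs \<in> S" if "is_cup T S xs" "length xs = n - 1" for xs
  proof -
    have "xs \<noteq> []" using that(2) assms(1) by auto
    then show "hd xs \<in> S" "last xs \<in> S" using that(1) unfolding is_cup_def by auto
  qed
  have subS: "cup_starts T S (n - 1) \<subseteq> S" "cup_ends T S (n - 1) \<subseteq> S"
    unfolding cup_starts_def cup_ends_def using hdS by auto
  have ne2: "cup_ends T S (n - 1) \<noteq> {}" using False unfolding cup_starts_def cup_ends_def by auto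
  have f1: "finite (cup_starts T S (n - 1))" "finite (cup_ends T S (n - 1))"
    using subS assms(2) finite_subset by auto
  have "Max (cup_starts T S (n - 1)) \<in> cup_starts T S (n - 1)" using f1 False by simp
  then obtain A where A: "is_cup T S A" "length A = n - 1" "hd A = Max (cup_starts T S (n - 1))"
    unfolding cup_starts_def by auto
  have "Min (cup_ends T S (n - 1)) \<in> cup_ends T S (n - 1)" using f1 ne2 by simp
  then obtain B where B: "is_cup T S B" "length B = n - 1" "last B = Min (cup_ends T S (n - 1))"
    unfolding cup_ends_def by auto
  show ?thesis
  proof (rule ccontr)
    assume "\<not> ?thesis"
    then have lt: "last B < hd A" using A B by simp
    have lA: "length A \<ge> 2" and lB: "length B \<ge> 2" using A B assms(1) by auto
    have pS: "hd A \<in> S" and qS: "last B \<in> S" using hdS(1)[OF A(1) A(2)] hdS(2)[OF B(1) B(2)] by auto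
    have t1: "\<not> T (B ! (length B - 2)) (last B) (hd A)"
    proof
      assume "T (B ! (length B - 2)) (last B) (hd A)"
      then have "is_cup T S (B @ [hd A])" using cup_ext_right[OF B(1) lB pS lt] by simp
      moreover have "length (B @ [hd A]) = n" using B assms(1) by simp
      ultimately show False using assms(4) by blast
    qed
    have t2: "\<not> T (last B) (hd A) (A ! 1)"
    proof
      assume "T (last B) (hd A) (A ! 1)"
      then have "is_cup T S (last B # A)" using cup_ext_left[OF A(1) lA qS lt] by simp
      moreover have "length (last B # A) = n" using A assms(1) by simp
      ultimately show False using assms(4) by blast
    qed
    have sB: "sorted_wrt (<) B" and sA: "sorted_wrt (<) A" and BS: "set B \<subseteq> S" and AS: "set A \<subseteq> S"
      using A(1) B(1) unfolding is_cup_def by auto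
    have lBn: "last B = B ! (length B - 1)" using lB by (intro last_conv_nth) auto
    have o1: "B ! (length B - 2) < last B" unfolding lBn using sB lB
      unfolding sorted_wrt_iff_nth_less by auto
    have hAn: "hd A = A ! 0" using lA by (intro hd_conv_nth) auto
    have o2: "hd A < A ! 1" unfolding hAn using sA lA
      unfolding sorted_wrt_iff_nth_less by auto
    have m1: "B ! (length B - 2) \<in> S" "A ! 1 \<in> S" using BS AS lA lB by auto
    let ?C = "[B ! (length B - 2), last B, hd A, A ! 1]"
    have "is_cap T S ?C"
      unfolding is_cap_def
    proof (intro conjI allI impI)
      show "sorted_wrt (<) ?C" using o1 o2 lt by auto
      show "set ?C \<subseteq> S" using m1 pS qS by auto
      fix i assume "0 < i \<and> i + 1 < length ?C"
      then have "i = 1 \<or> i = 2" by auto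
      then show "\<not> T (?C ! (i - 1)) (?C ! i) (?C ! (i + 1))" using t1 t2 by auto
    qed
    moreover have "length ?C = 4" by simp
    ultimately show False using assms(3) by blast
  qed
qed

end
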